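(* Let $P$ be an NL poset on $X_n$. For any NL poset $P'$ on $X_{n+1}$ whose restriction to $X_n$ is $P$, there is a unique order ideal $S$ of $P$ such that $\mathrm{Grow}_S(\mathcal I(P))=\mathcal I(P')$.
   Context: Let $X_n=\{0,1,\ldots,n-1\}$. A naturally labeled (NL) poset on $X_n$ is a partial order $\preceq$ on $X_n$ such that $x\preceq y$ implies $x\le y$ in the usual integer order. $\mathcal I(P)$ denotes the set of order ideals (downward closed subsets) of $P$. For a family $T$ of subsets of $X_n$ (closed under union and intersection, containing $\emptyset$ and $X_n$) and $S\in T$, $\mathrm{Grow}_S(T)=T\cup\{U\cup\{n\}: U\in T,\ S\subseteq U\}$, a family of subsets of $X_{n+1}$. *)

theory Defs
  imports Main
begin

abbreviation X :: "nat \<Rightarrow> nat set" where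
  "X n \<equiv> {..<n}"

definition NL_poset :: "nat \<Rightarrow> nat rel \<Rightarrow> bool" where
  "NL_poset n P \<longleftrightarrow> P \<subseteq> X n \<times> X n \<and> refl_on (X n) P \<and> antisym P \<and> trans P
     \<and> (\<forall>x y. (x, y) \<in> P \<longrightarrow> x \<le> y)"

definition restrict_rel :: "nat rel \<Rightarrow> nat set \<Rightarrow> nat rel" where
  "restrict_rel P A = P \<inter> (A \<times> A)"

definition ideals :: "nat \<Rightarrow> nat rel \<Rightarrow> nat set set" where
  "ideals n P = {S. S \<subseteq> X n \<and> (\<forall>x y. (x, y) \<in> P \<longrightarrow> y \<in> S \<longrightarrow> x \<in> S)}"

definition Grow :: "nat \<Rightarrow> nat set \<Rightarrow> nat set set \<Rightarrow> nat set set" where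
  "Grow n S T = T \<union> {U \<union> {n} | U. U \<in> T \<and> S \<subseteq> U}"

end

theory Submission
  imports Defs
begin

theorem theorem5p10:
  fixes n :: nat and P P' :: "nat rel"
  assumes "NL_poset n P"
    and "NL_poset (Suc n) P'"
    and "restrict_rel P' (X n) = P"
  shows "\<exists>!S. S \<in> ideals n P \<and> Grow n S (ideals n P) = ideals (Suc n) P'"
proof -
  have P'sub: "P' \<subseteq> X (Suc n) \<times> X (Suc n)" and P'le: "\<And>x y. (x,y) \<in> P' \<Longrightarrow> x \<le> y"
    and P'tr: "trans P'" and P'refl: "refl_on (X (Suc n)) P'"
    using assms(2) unfolding NL_poset_def by auto
  have Pdef: "\<And>x y. (x,y) \<in> P \<longleftrightarrow> (x,y) \<in> P' \<and> x < n \<and> y < n"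
    using assms(3) unfolding restrict_rel_def by auto
  define S where "S = {x. x < n \<and> (x, n) \<in> P'}"
  have SI: "S \<in> ideals n P"
    unfolding ideals_def S_def using Pdef P'tr by (auto dest: transD)
  have idn: "ideals n P = {U \<in> ideals (Suc n) P'. n \<notin> U}"
  proof (intro set_eqI iffI)
    fix U assume "U \<in> ideals n P"
    hence U: "U \<subseteq> X n" "\<And>x y. (x,y) \<in> P \<Longrightarrow> y \<in> U \<Longrightarrow> x \<in> U" unfolding ideals_def by auto
    have "\<And>x y. (x,y) \<in> P' \<Longrightarrow> y \<in> U \<Longrightarrow> x \<in> U"
    proof -
      fix x y assume "(x,y) \<in> P'" "y \<in> U"
      moreover have "y < n" using U(1) \<open>y \<in> U\<close> by auto
      moreover have "x < n" using P'le[OF \<open>(x,y) \<in> P'\<close>] \<open>y < n\<close> by auto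
      ultimately show "x \<in> U" using U(2) Pdef by auto
    qed
    thus "U \<in> {U \<in> ideals (Suc n) P'. n \<notin> U}" using U(1) unfolding ideals_def by auto
  next
    fix U assume "U \<in> {U \<in> ideals (Suc n) P'. n \<notin> U}"
    thus "U \<in> ideals n P" unfolding ideals_def using Pdef by (auto simp: less_Suc_eq)
  qed
  have G: "Grow n T (ideals n P) = ideals (Suc n) P' \<longleftrightarrow> T = S" if T: "T \<in> ideals n P" for T
  proof
    assume H: "Grow n T (ideals n P) = ideals (Suc n) P'"
    have "T \<union> {n} \<in> Grow n T (ideals n P)" unfolding Grow_def using T by blast
    hence I1: "T \<union> {n} \<in> ideals (Suc n) P'" using H by simp
    have "S \<union> {n} \<in> ideals (Suc n) P'"
      unfolding ideals_def S_def using P'tr P'le P'sub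
      by (auto dest: transD simp: less_Suc_eq)
    hence "S \<union> {n} \<in> Grow n T (ideals n P)" using H by simp
    then obtain U where U: "U \<in> ideals n P" "T \<subseteq> U" "S \<union> {n} = U \<union> {n}"
      unfolding Grow_def using idn by auto
    have "U \<subseteq> X n" using U(1) unfolding ideals_def by auto
    hence "U = S" using U(3) unfolding S_def by auto
    hence "T \<subseteq> S" using U by simp
    moreover have "S \<subseteq> T" using I1 T unfolding S_def ideals_def by auto
    ultimately show "T = S" by auto
  next
    assume "T = S"
    show "Grow n T (ideals n P) = ideals (Suc n) P'"
    proof
      show "Grow n T (ideals n P) \<subseteq> ideals (Suc n) P'"
      proof
        fix V assume "V \<in> Grow n T (ideals n P)"
        then consider "V \<in> ideals n P" | U where "V = U \<union> {n}" "U \<in> ideals n P" "S \<subseteq> U"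
          unfolding Grow_def using \<open>T = S\<close> by auto
        then show "V \<in> ideals (Suc n) P'"
        proof cases
          case 1 then show ?thesis using idn by auto
        next
          case 2
          show ?thesis unfolding 2(1) ideals_def
          proof (intro CollectI conjI allI impI)
            show "U \<union> {n} \<subseteq> X (Suc n)" using 2 unfolding ideals_def by auto
          next
            fix x y assume xy: "(x,y) \<in> P'" "y \<in> U \<union> {n}"
            show "x \<in> U \<union> {n}"
            proof (cases "y = n")
              case True
              then show ?thesis using xy 2(3) P'le[OF xy(1)] unfolding S_def
                by (cases "x = n") auto
            next
              case False
              then have "y \<in> U" using xy by auto
              with 2(2) have "y < n" unfolding ideals_def by auto
              with P'le[OF xy(1)] have "x < n" by auto
              with \<open>y < n\<close> xy(1) Pdef have "(x,y) \<in> P" by auto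
              with \<open>y \<in> U\<close> 2(2) show ?thesis unfolding ideals_def by auto
            qed
          qed
        qed
      qed
    next
      show "ideals (Suc n) P' \<subseteq> Grow n T (ideals n P)"
      proof
        fix V assume V: "V \<in> ideals (Suc n) P'"
        show "V \<in> Grow n T (ideals n P)"
        proof (cases "n \<in> V")
          case False then show ?thesis using V idn unfolding Grow_def by auto
        next
          case True
          define U where "U = V - {n}"
          have "U \<in> ideals n P" using V unfolding U_def ideals_def using Pdef
            by (auto simp: less_Suc_eq)
          moreover have "S \<subseteq> U" using V True unfolding U_def S_def ideals_def by auto
          moreover have "V = U \<union> {n}" using True U_def by auto
          ultimately show ?thesis unfolding Grow_def using \<open>T = S\<close> by blast
        qed
      qed
    qed
  qed
  show ?thesis using SI G by blast
qed

end
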